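(* Let $n$ be a positive integer and $m$ a positive even integer. Let $\mathcal{A}$ and $\mathcal{B}$ be $m$-th order $n$-dimensional real weakly symmetric tensors with $\mathcal{B}$ positive definite, and let $\lambda_{\min}$ be the smallest $\mathcal{B}_r$-eigenvalue of $\mathcal{A}$. Define $f_1:\mathbb{R}^n\to\mathbb{R}$ by $$f_1(x)=\frac{1}{2m}(\mathcal{B}x^m)^2+\frac{1}{m}\mathcal{A}x^m,$$ whose gradient is $\nabla f_1(x)=(\mathcal{B}x^m)\,\mathcal{B}x^{m-1}+\mathcal{A}x^{m-1}$. Then: (a) $f_1$ is coercive on $\mathbb{R}^n$, i.e. $f_1(x)\to+\infty$ as $\|x\|\to\infty$. (b) The critical points of $f_1$ are (i) $x=0$, and (ii) any $\mathcal{B}_r$-eigenvector $x$ of $\mathcal{A}$ associated with a $\mathcal{B}_r$-eigenvalue $\lambda<0$ of $\mathcal{A}$ satisfying $\mathcal{B}x^m=-\lambda$. (c) If $\lambda_{\min}<0$, then $f_1$ attains its global minimum value $\min f_1(x)=-\frac{1}{2m}\lambda_{\min}^2$ at any $\mathcal{B}_r$-eigenvector associated with $\lambda_{\min}$ satisfying $\mathcal{B}x^m=-\lambda_{\min}$. (d) If $\lambda_{\min}\ge0$, then $x=0$ is the unique critical point of $f_1$ and the unique global minimizer of $f_1$ on $\mathbb{R}^n$.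
   Context: An $m$-th order $n$-dimensional real tensor is an array $\mathcal{A}=(A_{i_1\cdots i_m})$ with indices in $\{1,\dots,n\}$ and real entries. For $x\in\mathbb{R}^n$, $\mathcal{A}x^m=\sum_{i_1,\dots,i_m=1}^n A_{i_1\cdots i_m}x_{i_1}\cdots x_{i_m}$, and $\mathcal{A}x^{m-1}\in\mathbb{R}^n$ has $i$-th entry $\sum_{i_2,\dots,i_m=1}^n A_{i i_2\cdots i_m}x_{i_2}\cdots x_{i_m}$. A tensor is weakly symmetric if $\nabla(\mathcal{A}x^m)=m\,\mathcal{A}x^{m-1}$ for all $x$, and positive definite if $\mathcal{A}x^m>0$ for all $x\ne0$. With $\mathcal{B}$ weakly symmetric positive definite, $\lambda\in\mathbb{R}$ is a $\mathcal{B}_r$-eigenvalue of $\mathcal{A}$, with $\mathcal{B}_r$-eigenvector $x\in\mathbb{R}^n\setminus\{0\}$, if $\mathcal{A}x^{m-1}=\lambda\,\mathcal{B}x^{m-1}$. The set of $\mathcal{B}_r$-eigenvalues is nonempty and has a smallest element $\lambda_{\min}$. *)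

theory Defs
  imports "HOL-Analysis.Analysis"
begin

text \<open>An m-th order tensor over the index type 'n (dimension n = CARD('n)):
  entries A i for multi-indices i : {0..<m} -> 'n (values outside {0..<m} irrelevant).\<close>
type_synonym 'n tensor = "(nat \<Rightarrow> 'n) \<Rightarrow> real"

definition multi_idx :: "nat \<Rightarrow> (nat \<Rightarrow> 'n) set" where
  "multi_idx m = PiE {..<m} (\<lambda>_. UNIV)"

definition tpow :: "'n::finite tensor \<Rightarrow> nat \<Rightarrow> real^'n \<Rightarrow> real" where
  "tpow A m x = (\<Sum>i\<in>multi_idx m. A i * (\<Prod>k<m. x $ i k))"

definition tvec :: "'n::finite tensor \<Rightarrow> nat \<Rightarrow> real^'n \<Rightarrow> real^'n" where
  "tvec A m x = (\<chi> j. \<Sum>i\<in>{i\<in>multi_idx m. i 0 = j}. A i * (\<Prod>k\<in>{1..<m}. x $ i k))"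

definition weakly_symmetric :: "'n::finite tensor \<Rightarrow> nat \<Rightarrow> bool" where
  "weakly_symmetric A m \<longleftrightarrow>
     (\<forall>x. ((\<lambda>y. tpow A m y) has_derivative (\<lambda>h. real m * (tvec A m x \<bullet> h))) (at x))"

definition pos_def_tensor :: "'n::finite tensor \<Rightarrow> nat \<Rightarrow> bool" where
  "pos_def_tensor A m \<longleftrightarrow> (\<forall>x. x \<noteq> 0 \<longrightarrow> tpow A m x > 0)"

definition Br_eigenpair :: "'n::finite tensor \<Rightarrow> 'n tensor \<Rightarrow> nat \<Rightarrow> real \<Rightarrow> real^'n \<Rightarrow> bool" where
  "Br_eigenpair A B m lam x \<longleftrightarrow> x \<noteq> 0 \<and> tvec A m x = lam *\<^sub>R tvec B m x"

definition Br_eigenvalues :: "'n::finite tensor \<Rightarrow> 'n tensor \<Rightarrow> nat \<Rightarrow> real set" where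
  "Br_eigenvalues A B m = {lam. \<exists>x. Br_eigenpair A B m lam x}"

definition f1 :: "'n::finite tensor \<Rightarrow> 'n tensor \<Rightarrow> nat \<Rightarrow> real^'n \<Rightarrow> real" where
  "f1 A B m x = (1 / (2 * real m)) * (tpow B m x)\<^sup>2 + (1 / real m) * tpow A m x"

definition critical_point :: "(real^'n::finite \<Rightarrow> real) \<Rightarrow> real^'n \<Rightarrow> bool" where
  "critical_point f x \<longleftrightarrow> (f has_derivative (\<lambda>h. 0)) (at x)"

end

theory Submission
  imports Defs
begin

lemma tpow_scale: "tpow A m (c *\<^sub>R x) = c ^ m * tpow A m x"
  unfolding tpow_def
  by (simp add: prod.distrib sum_distrib_left mult.assoc mult.left_commute)

lemma tvec_scale: "tvec A m (c *\<^sub>R x) = c ^ (m - 1) *\<^sub>R tvec A m x"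
  unfolding tvec_def
  by (simp add: vec_eq_iff prod.distrib sum_distrib_left mult.assoc mult.left_commute)

lemma tpow_zero: "m > 0 \<Longrightarrow> tpow A m 0 = 0"
  by (metis scale_zero_left tpow_scale zero_power mult_zero_left)

lemma tvec_zero: "tvec A m 0 = 0" if "m \<ge> 2"
proof -
  have "m - 1 > 0" using that by simp
  thus ?thesis by (metis scale_zero_left tvec_scale zero_power)
qed

lemma euler:
  assumes "weakly_symmetric A m" "m > 0"
  shows "tvec A m x \<bullet> x = tpow A m x"
proof -
  have d: "((\<lambda>y. tpow A m y) has_derivative (\<lambda>h. real m * (tvec A m x \<bullet> h))) (at ((\<lambda>t::real. t *\<^sub>R x) 1))"
    using assms(1) unfolding weakly_symmetric_def by (metis scaleR_one)
  have l: "((\<lambda>t::real. t *\<^sub>R x) has_derivative (\<lambda>t. t *\<^sub>R x)) (at 1)"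
    by (intro derivative_eq_intros) auto
  have "((\<lambda>t::real. tpow A m (t *\<^sub>R x)) has_derivative (\<lambda>t. real m * (tvec A m x \<bullet> (t *\<^sub>R x)))) (at 1)"
    using has_derivative_compose[OF l d] by simp
  hence 1: "((\<lambda>t::real. tpow A m (t *\<^sub>R x)) has_real_derivative (real m * (tvec A m x \<bullet> x))) (at 1)"
    unfolding has_field_derivative_def by (rule has_derivative_eq_rhs) (auto simp: mult_ac)
  have 2: "((\<lambda>t::real. tpow A m (t *\<^sub>R x)) has_real_derivative (real m * tpow A m x)) (at 1)"
    unfolding tpow_scale
    by (rule derivative_eq_intros refl | simp)+
  from DERIV_unique[OF 1 2] assms(2) show ?thesis by simp
qed

lemma tpow_cont:
  assumes "weakly_symmetric A m"
  shows "continuous_on S (tpow A m)"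
  by (rule has_derivative_continuous_on[where f'="\<lambda>x h. real m * (tvec A m x \<bullet> h)"])
     (use assms in \<open>auto simp: weakly_symmetric_def intro: has_derivative_at_withinI\<close>)

lemma tpow_normalize:
  assumes "x \<noteq> 0"
  shows "tpow A m x = norm x ^ m * tpow A m (x /\<^sub>R norm x)"
proof -
  have "x = norm x *\<^sub>R (x /\<^sub>R norm x)" using assms by simp
  hence "tpow A m x = tpow A m (norm x *\<^sub>R (x /\<^sub>R norm x))" by simp
  thus ?thesis by (simp only: tpow_scale)
qed

lemma tpow_lower:
  fixes B :: "'n::finite tensor"
  assumes "weakly_symmetric B m" "pos_def_tensor B m" "m > 0"
  shows "\<exists>c>0. \<forall>x. c * norm x ^ m \<le> tpow B m x"
proof -
  have ne: "sphere (0::real^'n) 1 \<noteq> {}"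
  proof -
    have "(axis (undefined::'n) (1::real)) \<in> sphere 0 1" by (simp add: dist_norm)
    thus ?thesis by blast
  qed
  obtain x0 where x0: "x0 \<in> sphere (0::real^'n) 1" "\<forall>y\<in>sphere 0 1. tpow B m x0 \<le> tpow B m y"
    using continuous_attains_inf[OF compact_sphere ne tpow_cont[OF assms(1)]] by blast
  have "x0 \<noteq> 0" using x0(1) by auto
  hence c: "tpow B m x0 > 0" using assms(2) by (simp add: pos_def_tensor_def)
  have "tpow B m x0 * norm x ^ m \<le> tpow B m x" for x
  proof (cases "x = 0")
    case True thus ?thesis using assms(3) by (simp add: tpow_zero zero_power)
  next
    case False
    have "x /\<^sub>R norm x \<in> sphere 0 1" using False by (simp add: sphere_def dist_norm)
    hence "tpow B m x0 \<le> tpow B m (x /\<^sub>R norm x)" using x0(2) by blast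
    hence "norm x ^ m * tpow B m x0 \<le> norm x ^ m * tpow B m (x /\<^sub>R norm x)"
      by (simp add: mult_left_mono)
    thus ?thesis using tpow_normalize[OF False, of B m] by (simp add: mult.commute)
  qed
  thus ?thesis using c by blast
qed

lemma tpow_upper:
  fixes A :: "'n::finite tensor"
  assumes "weakly_symmetric A m" "m > 0"
  shows "\<exists>C\<ge>0. \<forall>x. \<bar>tpow A m x\<bar> \<le> C * norm x ^ m"
proof -
  have ne: "sphere (0::real^'n) 1 \<noteq> {}"
  proof -
    have "(axis (undefined::'n) (1::real)) \<in> sphere 0 1" by (simp add: dist_norm)
    thus ?thesis by blast
  qed
  have cont: "continuous_on (sphere 0 1) (\<lambda>x. \<bar>tpow A m x\<bar>)"
    by (intro continuous_on_rabs tpow_cont[OF assms(1)])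
  obtain x0 where x0: "x0 \<in> sphere (0::real^'n) 1" "\<forall>y\<in>sphere 0 1. \<bar>tpow A m y\<bar> \<le> \<bar>tpow A m x0\<bar>"
    using continuous_attains_sup[OF compact_sphere ne cont] by blast
  have "\<bar>tpow A m x\<bar> \<le> \<bar>tpow A m x0\<bar> * norm x ^ m" for x
  proof (cases "x = 0")
    case True thus ?thesis using assms(2) by (simp add: tpow_zero)
  next
    case False
    have "x /\<^sub>R norm x \<in> sphere 0 1" using False by (simp add: sphere_def dist_norm)
    hence "\<bar>tpow A m (x /\<^sub>R norm x)\<bar> \<le> \<bar>tpow A m x0\<bar>" using x0(2) by blast
    hence "norm x ^ m * \<bar>tpow A m (x /\<^sub>R norm x)\<bar> \<le> norm x ^ m * \<bar>tpow A m x0\<bar>"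
      by (simp add: mult_left_mono)
    thus ?thesis using tpow_normalize[OF False, of A m] by (simp add: mult.commute abs_mult)
  qed
  thus ?thesis by (intro exI[of _ "\<bar>tpow A m x0\<bar>"]) auto
qed

lemma f1_deriv:
  assumes "weakly_symmetric A m" "weakly_symmetric B m" "m > 0"
  shows "(f1 A B m has_derivative
              (\<lambda>h. (tpow B m x *\<^sub>R tvec B m x + tvec A m x) \<bullet> h)) (at x)"
proof -
  have dA: "(tpow A m has_derivative (\<lambda>h. real m * (tvec A m x \<bullet> h))) (at x)"
    using assms(1) unfolding weakly_symmetric_def by blast
  have dB: "(tpow B m has_derivative (\<lambda>h. real m * (tvec B m x \<bullet> h))) (at x)"
    using assms(2) unfolding weakly_symmetric_def by blast
  have "((\<lambda>y. (1 / (2 * real m)) * (tpow B m y)\<^sup>2 + (1 / real m) * tpow A m y) has_derivative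
     (\<lambda>h. (1 / (2 * real m)) * (of_nat 2 * (real m * (tvec B m x \<bullet> h)) * tpow B m x ^ (2 - 1))
        + (1 / real m) * (real m * (tvec A m x \<bullet> h)))) (at x)"
    by (intro has_derivative_add has_derivative_mult_right has_derivative_power dA dB)
  moreover have "(\<lambda>h. (1 / (2 * real m)) * (of_nat 2 * (real m * (tvec B m x \<bullet> h)) * tpow B m x ^ (2 - 1))
        + (1 / real m) * (real m * (tvec A m x \<bullet> h))) = (\<lambda>h. (tpow B m x *\<^sub>R tvec B m x + tvec A m x) \<bullet> h)"
    using assms(3) by (auto simp: inner_add_left field_simps)
  ultimately show ?thesis unfolding f1_def[abs_def] by simp
qed

lemma crit_iff:
  assumes "weakly_symmetric A m" "weakly_symmetric B m" "m > 0"
  shows "critical_point (f1 A B m) x \<longleftrightarrow> tpow B m x *\<^sub>R tvec B m x + tvec A m x = 0"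
proof
  assume "critical_point (f1 A B m) x"
  hence "(\<lambda>h. (tpow B m x *\<^sub>R tvec B m x + tvec A m x) \<bullet> h) = (\<lambda>h. 0)"
    unfolding critical_point_def using has_derivative_unique f1_deriv[OF assms] by blast
  hence "(tpow B m x *\<^sub>R tvec B m x + tvec A m x) \<bullet> (tpow B m x *\<^sub>R tvec B m x + tvec A m x) = 0"
    by metis
  thus "tpow B m x *\<^sub>R tvec B m x + tvec A m x = 0" by simp
next
  assume "tpow B m x *\<^sub>R tvec B m x + tvec A m x = 0"
  thus "critical_point (f1 A B m) x" unfolding critical_point_def
    using f1_deriv[OF assms, of x] by simp
qed

lemma f1_lower:
  fixes A B :: "'n::finite tensor"
  assumes "weakly_symmetric A m" "weakly_symmetric B m" "pos_def_tensor B m" "m > 0"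
  shows "\<exists>a>0. \<exists>b\<ge>0. \<forall>x. a * (norm x ^ m)\<^sup>2 - b * norm x ^ m \<le> f1 A B m x"
proof -
  obtain c where c: "c > 0" "\<forall>x. c * norm x ^ m \<le> tpow B m x" using tpow_lower[OF assms(2,3,4)] by blast
  obtain C where C: "C \<ge> 0" "\<forall>x. \<bar>tpow A m x\<bar> \<le> C * norm x ^ m" using tpow_upper[OF assms(1,4)] by blast
  have "c^2 / (2 * real m) * (norm x ^ m)\<^sup>2 - C / real m * norm x ^ m \<le> f1 A B m x" for x
  proof -
    have "(c * norm x ^ m)^2 \<le> (tpow B m x)^2"
      using c by (intro power_mono) auto
    hence 1: "c^2 / (2 * real m) * (norm x ^ m)\<^sup>2 \<le> (1 / (2 * real m)) * (tpow B m x)\<^sup>2"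
      using assms(4) by (simp add: power_mult_distrib divide_right_mono)
    have "- (C * norm x ^ m) \<le> tpow A m x" using C(2)[rule_format, of x] by linarith
    hence 2: "- (C / real m * norm x ^ m) \<le> (1 / real m) * tpow A m x"
      using assms(4) divide_right_mono[of "- (C * norm x ^ m)" "tpow A m x" "real m"] by simp
    show ?thesis using 1 2 unfolding f1_def by linarith
  qed
  moreover have "c^2 / (2 * real m) > 0" "C / real m \<ge> 0" using c C assms(4) by auto
  ultimately show ?thesis by blast
qed

lemma coercive:
  fixes A B :: "'n::finite tensor"
  assumes "weakly_symmetric A m" "weakly_symmetric B m" "pos_def_tensor B m" "m > 0"
  shows "filterlim (f1 A B m) at_top at_infinity"
proof -
  obtain a b where ab: "a > 0" "b \<ge> 0" "\<forall>x. a * (norm x ^ m)\<^sup>2 - b * norm x ^ m \<le> f1 A B m x"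
    using f1_lower[OF assms] by blast
  show ?thesis unfolding filterlim_at_top eventually_at_infinity
  proof
    fix Z :: real
    show "\<exists>r. \<forall>x. r \<le> norm x \<longrightarrow> Z \<le> f1 A B m x"
    proof (intro exI allI impI)
      fix x :: "real^'n"
      assume r: "max 1 ((\<bar>Z\<bar> + b) / a) \<le> norm x"
      define s where "s = norm x ^ m"
      have "norm x ^ 1 \<le> norm x ^ m" using r assms(4) by (intro power_increasing) auto
      hence s1: "norm x \<le> s" unfolding s_def by simp
      have "1 \<le> s" "(\<bar>Z\<bar> + b) / a \<le> s" using s1 r by auto
      hence "\<bar>Z\<bar> + b \<le> a * s" using ab(1) by (simp add: field_simps)
      hence "s * \<bar>Z\<bar> \<le> s * (a * s - b)" using \<open>1 \<le> s\<close> by (intro mult_left_mono) auto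
      moreover have "\<bar>Z\<bar> \<le> s * \<bar>Z\<bar>" using \<open>1 \<le> s\<close>
        using mult_right_mono[of 1 s "\<bar>Z\<bar>"] by simp
      ultimately have "Z \<le> a * s^2 - b * s" by (simp add: power2_eq_square algebra_simps)
      thus "Z \<le> f1 A B m x" using ab(3)[rule_format, of x] unfolding s_def by linarith
    qed
  qed
qed

lemma f1_zero: "m > 0 \<Longrightarrow> f1 A B m 0 = 0"
  by (simp add: f1_def tpow_zero)

lemma minimizer:
  fixes A B :: "'n::finite tensor"
  assumes "weakly_symmetric A m" "weakly_symmetric B m" "pos_def_tensor B m" "m > 0"
  shows "\<exists>x. \<forall>y. f1 A B m x \<le> f1 A B m y"
proof -
  have "eventually (\<lambda>x. 1 \<le> f1 A B m x) at_infinity"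
    using coercive[OF assms] unfolding filterlim_at_top by blast
  then obtain R where R: "\<forall>x. R \<le> norm x \<longrightarrow> 1 \<le> f1 A B m x"
    unfolding eventually_at_infinity by blast
  have cont: "continuous_on (cball 0 \<bar>R\<bar>) (f1 A B m)"
    using f1_deriv[OF assms(1,2,4)]
    by (intro has_derivative_continuous_on) (auto intro: has_derivative_at_withinI)
  obtain x where x: "x \<in> cball 0 \<bar>R\<bar>" "\<forall>y\<in>cball 0 \<bar>R\<bar>. f1 A B m x \<le> f1 A B m y"
    using continuous_attains_inf[OF compact_cball _ cont] by fastforce
  have "f1 A B m x \<le> f1 A B m y" for y
  proof (cases "y \<in> cball 0 \<bar>R\<bar>")
    case True thus ?thesis using x by blast
  next
    case False
    hence "R \<le> norm y" by auto
    hence "1 \<le> f1 A B m y" using R by blast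
    moreover have "f1 A B m x \<le> f1 A B m 0" using x(2) by simp
    ultimately show ?thesis using f1_zero[OF assms(4), of A B] by simp
  qed
  thus ?thesis by blast
qed

lemma global_min_crit:
  assumes "weakly_symmetric A m" "weakly_symmetric B m" "m > 0"
    and "\<forall>y. f1 A B m x \<le> f1 A B m y"
  shows "critical_point (f1 A B m) x"
proof -
  have d: "(f1 A B m has_derivative (\<lambda>h. (tpow B m x *\<^sub>R tvec B m x + tvec A m x) \<bullet> h)) (at x)"
    using f1_deriv[OF assms(1-3)] by blast
  have "(\<lambda>h. (tpow B m x *\<^sub>R tvec B m x + tvec A m x) \<bullet> h) = (\<lambda>v. 0)"
    by (rule differential_zero_maxmin[OF UNIV_I open_UNIV d]) (use assms(4) in auto)
  thus ?thesis using d unfolding critical_point_def by simp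
qed

lemma f1_eig:
  assumes "weakly_symmetric A m" "weakly_symmetric B m" "m > 0"
    and "Br_eigenpair A B m lam x" "tpow B m x = - lam"
  shows "f1 A B m x = - (lam\<^sup>2 / (2 * real m))"
proof -
  have "tpow A m x = tvec A m x \<bullet> x" using euler[OF assms(1,3)] by simp
  also have "\<dots> = lam * (tvec B m x \<bullet> x)" using assms(4) by (simp add: Br_eigenpair_def)
  also have "\<dots> = - (lam * lam)" using euler[OF assms(2,3)] assms(5) by (simp add: power2_eq_square)
  finally show ?thesis using assms(3,5) unfolding f1_def by (simp add: field_simps power2_eq_square)
qed

lemma eig_scale:
  assumes "Br_eigenpair A B m lam x" "t \<noteq> 0"
  shows "Br_eigenpair A B m lam (t *\<^sub>R x)"
  using assms by (simp add: Br_eigenpair_def tvec_scale)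

theorem theorem5:
  fixes A B :: "'n::finite tensor" and m :: nat and lmin :: real
  assumes "m > 0" and "even m"
    and "weakly_symmetric A m" and "weakly_symmetric B m"
    and "pos_def_tensor B m"
    and "lmin \<in> Br_eigenvalues A B m" and "\<forall>lam\<in>Br_eigenvalues A B m. lmin \<le> lam"
  shows "(\<forall>x. (f1 A B m has_derivative
              (\<lambda>h. (tpow B m x *\<^sub>R tvec B m x + tvec A m x) \<bullet> h)) (at x)) \<and>
         filterlim (f1 A B m) at_top at_infinity \<and>
         (\<forall>x. critical_point (f1 A B m) x \<longleftrightarrow>
           x = 0 \<or> (\<exists>lam. lam < 0 \<and> Br_eigenpair A B m lam x \<and> tpow B m x = - lam)) \<and>
         (lmin < 0 \<longrightarrow>
           (\<exists>x. Br_eigenpair A B m lmin x \<and> tpow B m x = - lmin) \<and>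
           (\<forall>x. Br_eigenpair A B m lmin x \<and> tpow B m x = - lmin \<longrightarrow>
                 (\<forall>y. f1 A B m x \<le> f1 A B m y) \<and>
                 f1 A B m x = - (lmin\<^sup>2 / (2 * real m)))) \<and>
         (lmin \<ge> 0 \<longrightarrow>
           {x. critical_point (f1 A B m) x} = {0} \<and>
           (\<forall>y. f1 A B m 0 \<le> f1 A B m y) \<and>
           (\<forall>x. (\<forall>y. f1 A B m x \<le> f1 A B m y) \<longrightarrow> x = 0))"
proof -
  note ws = assms(3,4) assms(1)
  have m2: "m \<ge> 2" using assms(1,2) by (metis dvd_imp_le even_iff_mod_2_eq_zero le_neq_implies_less less_2_cases_iff not_less)
  have pB: "x \<noteq> 0 \<Longrightarrow> tpow B m x > 0" for x using assms(5) by (simp add: pos_def_tensor_def)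
  have D: "\<forall>x. (f1 A B m has_derivative
              (\<lambda>h. (tpow B m x *\<^sub>R tvec B m x + tvec A m x) \<bullet> h)) (at x)"
    using f1_deriv[OF ws] by blast
  have C: "filterlim (f1 A B m) at_top at_infinity" by (rule coercive[OF assms(3,4,5,1)])
  have CP: "critical_point (f1 A B m) x \<longleftrightarrow>
           x = 0 \<or> (\<exists>lam. lam < 0 \<and> Br_eigenpair A B m lam x \<and> tpow B m x = - lam)" for x
  proof -
    have "tpow B m x *\<^sub>R tvec B m x + tvec A m x = 0 \<longleftrightarrow>
           x = 0 \<or> (\<exists>lam. lam < 0 \<and> Br_eigenpair A B m lam x \<and> tpow B m x = - lam)"
    proof
      assume h: "tpow B m x *\<^sub>R tvec B m x + tvec A m x = 0"
      show "x = 0 \<or> (\<exists>lam. lam < 0 \<and> Br_eigenpair A B m lam x \<and> tpow B m x = - lam)"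
      proof (cases "x = 0")
        case False
        have "tvec A m x = (- tpow B m x) *\<^sub>R tvec B m x" using h by (simp add: eq_neg_iff_add_eq_0 add.commute)
        hence "Br_eigenpair A B m (- tpow B m x) x" using False by (simp add: Br_eigenpair_def)
        moreover have "- tpow B m x < 0" using pB[OF False] by simp
        ultimately have "\<exists>lam. lam < 0 \<and> Br_eigenpair A B m lam x \<and> tpow B m x = - lam"
          by (intro exI[of _ "- tpow B m x"]) simp
        thus ?thesis by blast
      qed simp
    next
      assume "x = 0 \<or> (\<exists>lam. lam < 0 \<and> Br_eigenpair A B m lam x \<and> tpow B m x = - lam)"
      thus "tpow B m x *\<^sub>R tvec B m x + tvec A m x = 0"
      proof
        assume "x = 0" thus ?thesis using m2 by (simp add: tvec_zero)
      next
        assume "\<exists>lam. lam < 0 \<and> Br_eigenpair A B m lam x \<and> tpow B m x = - lam"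
        then obtain lam where "Br_eigenpair A B m lam x" "tpow B m x = - lam" by blast
        thus ?thesis by (simp add: Br_eigenpair_def)
      qed
    qed
    thus ?thesis using crit_iff[OF ws] by simp
  qed
  obtain xs where xs: "\<forall>y. f1 A B m xs \<le> f1 A B m y" using minimizer[OF assms(3,4,5,1)] by blast
  have xsc: "critical_point (f1 A B m) xs" by (rule global_min_crit[OF ws xs])
  have P3: "lmin < 0 \<longrightarrow>
           (\<exists>x. Br_eigenpair A B m lmin x \<and> tpow B m x = - lmin) \<and>
           (\<forall>x. Br_eigenpair A B m lmin x \<and> tpow B m x = - lmin \<longrightarrow>
                 (\<forall>y. f1 A B m x \<le> f1 A B m y) \<and>
                 f1 A B m x = - (lmin\<^sup>2 / (2 * real m)))"
  proof
    assume neg: "lmin < 0"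
    obtain y where y: "Br_eigenpair A B m lmin y" using assms(6) by (auto simp: Br_eigenvalues_def)
    have "y \<noteq> 0" using y by (simp add: Br_eigenpair_def)
    hence bpos: "tpow B m y > 0" by (rule pB)
    define t where "t = root m (- lmin / tpow B m y)"
    have "t > 0" unfolding t_def using neg bpos assms(1) by (simp add: divide_neg_pos)
    hence "t \<noteq> 0" by simp
    have "t ^ m = - lmin / tpow B m y" unfolding t_def using neg bpos assms(1)
      by (intro real_root_pow_pos) (auto simp: divide_neg_pos)
    hence "tpow B m (t *\<^sub>R y) = - lmin" using bpos by (simp add: tpow_scale)
    hence E: "\<exists>x. Br_eigenpair A B m lmin x \<and> tpow B m x = - lmin"
      using eig_scale[OF y \<open>t \<noteq> 0\<close>] by blast
    have lowb: "- (lmin\<^sup>2 / (2 * real m)) \<le> f1 A B m xs"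
    proof -
      have "xs = 0 \<or> (\<exists>lam. lam < 0 \<and> Br_eigenpair A B m lam xs \<and> tpow B m xs = - lam)"
        using CP xsc by blast
      thus ?thesis
      proof
        assume "xs = 0"
        moreover have "0 \<le> lmin\<^sup>2 / (2 * real m)" by simp
        ultimately show ?thesis using f1_zero[OF assms(1), of A B] by simp
      next
        assume "\<exists>lam. lam < 0 \<and> Br_eigenpair A B m lam xs \<and> tpow B m xs = - lam"
        then obtain lam where l: "lam < 0" "Br_eigenpair A B m lam xs" "tpow B m xs = - lam" by blast
        have "lmin \<le> lam" using assms(7) l(2) by (auto simp: Br_eigenvalues_def)
        hence "lam * lam \<le> lmin * lmin" using l(1) mult_mono[of "-lam" "-lmin" "-lam" "-lmin"] by simp
        hence "lam\<^sup>2 / (2 * real m) \<le> lmin\<^sup>2 / (2 * real m)"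
          by (intro divide_right_mono) (auto simp: power2_eq_square)
        thus ?thesis using f1_eig[OF ws l(2,3)] by simp
      qed
    qed
    show "(\<exists>x. Br_eigenpair A B m lmin x \<and> tpow B m x = - lmin) \<and>
           (\<forall>x. Br_eigenpair A B m lmin x \<and> tpow B m x = - lmin \<longrightarrow>
                 (\<forall>y. f1 A B m x \<le> f1 A B m y) \<and>
                 f1 A B m x = - (lmin\<^sup>2 / (2 * real m)))"
    proof (intro conjI E allI impI)
      fix x y assume h: "Br_eigenpair A B m lmin x \<and> tpow B m x = - lmin"
      have "f1 A B m x = - (lmin\<^sup>2 / (2 * real m))" using f1_eig[OF ws] h by blast
      thus "f1 A B m x \<le> f1 A B m y" using lowb xs by (metis order_trans)
    next
      fix x assume h: "Br_eigenpair A B m lmin x \<and> tpow B m x = - lmin"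
      show "f1 A B m x = - (lmin\<^sup>2 / (2 * real m))" using f1_eig[OF ws] h by blast
    qed
  qed
  have P4: "lmin \<ge> 0 \<longrightarrow>
           {x. critical_point (f1 A B m) x} = {0} \<and>
           (\<forall>y. f1 A B m 0 \<le> f1 A B m y) \<and>
           (\<forall>x. (\<forall>y. f1 A B m x \<le> f1 A B m y) \<longrightarrow> x = 0)"
  proof
    assume nn: "lmin \<ge> 0"
    have cr: "critical_point (f1 A B m) x \<longleftrightarrow> x = 0" for x
    proof -
      have "\<not> (lam < 0 \<and> Br_eigenpair A B m lam x)" for lam
        using assms(7) nn by (force simp: Br_eigenvalues_def)
      thus ?thesis using CP by blast
    qed
    have uniq: "\<forall>x. (\<forall>y. f1 A B m x \<le> f1 A B m y) \<longrightarrow> x = 0"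
      using global_min_crit[OF ws] cr by blast
    have "xs = 0" using uniq xs by blast
    thus "{x. critical_point (f1 A B m) x} = {0} \<and>
           (\<forall>y. f1 A B m 0 \<le> f1 A B m y) \<and>
           (\<forall>x. (\<forall>y. f1 A B m x \<le> f1 A B m y) \<longrightarrow> x = 0)"
      using cr uniq xs by auto
  qed
  show ?thesis using D C CP P3 P4 by blast
qed

end
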